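(* Let $A_0\in\mathbb{R}^{n\times n}$, $B\in\mathbb{R}^{n\times1}$, $K\in\mathbb{R}^{1\times n}$, and let $P_0\succeq0$ be symmetric with $A_0^\top P_0+P_0A_0\preceq0$, $\ker P_0\subseteq\ker A_0$, and $P_0$ not of full rank. If $h,\mu\in\mathbb{R}$ satisfy $P_0B-hA_0^\top K^\top=\mu K^\top$ and $P_0+hK^\top K\succ0$, then $\mu=0$. *)

theory Defs
  imports "HOL-Analysis.Analysis"
begin

definition sym_mat :: "real^'n^'n \<Rightarrow> bool" where
  "sym_mat M \<longleftrightarrow> transpose M = M"

definition psd :: "real^'n^'n \<Rightarrow> bool" where
  "psd M \<longleftrightarrow> (\<forall>x. x \<bullet> (M *v x) \<ge> 0)"

definition nsd :: "real^'n^'n \<Rightarrow> bool" where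
  "nsd M \<longleftrightarrow> (\<forall>x. x \<bullet> (M *v x) \<le> 0)"

definition pd :: "real^'n^'n \<Rightarrow> bool" where
  "pd M \<longleftrightarrow> (\<forall>x. x \<noteq> 0 \<longrightarrow> x \<bullet> (M *v x) > 0)"

end

theory Submission
  imports Defs
begin

lemma one_dim_nz:
  fixes w :: "real^1"
  assumes "w \<noteq> 0"
  shows "w \<bullet> (\<chi> i. 1) \<noteq> 0"
proof -
  have u: "(UNIV::1 set) = {1}" by auto
  have "w $ 1 \<noteq> 0"
  proof
    assume "w $ 1 = 0"
    then have "w = 0" by (metis (full_types) num1_eq1 vec_eq_iff zero_index)
    with assms show False by simp
  qed
  moreover have "w \<bullet> (\<chi> i. 1) = w $ 1" by (simp add: inner_vec_def u)
  ultimately show ?thesis by simp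
qed

theorem mainTheorem6:
  fixes A0 P0 :: "real^'n^'n" and B :: "real^1^'n" and K :: "real^'n^1"
    and h \<mu> :: real
  assumes "sym_mat P0" and "psd P0"
    and "nsd (transpose A0 ** P0 + P0 ** A0)"
    and "\<forall>x. P0 *v x = 0 \<longrightarrow> A0 *v x = 0"
    and "rank P0 < CARD('n)"
    and "P0 ** B - h *\<^sub>R (transpose A0 ** transpose K) = \<mu> *\<^sub>R transpose K"
    and "pd (P0 + h *\<^sub>R (transpose K ** K))"
  shows "\<mu> = 0"
proof -
  obtain v where v0: "v \<noteq> 0" and Pv: "P0 *v v = 0"
    using matrix_nonfull_linear_equations_eq[of P0] assms(5) by auto
  have Av: "A0 *v v = 0" using assms(4) Pv by auto
  have PT: "transpose P0 = P0" using assms(1) by (simp add: sym_mat_def)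
  define e :: "real^1" where "e = (\<chi> i. 1)"
  define w where "w = K *v v"
  have eq: "P0 *v (B *v e) - h *\<^sub>R (transpose A0 *v (transpose K *v e)) = \<mu> *\<^sub>R (transpose K *v e)"
  proof -
    have "(P0 ** B - h *\<^sub>R (transpose A0 ** transpose K)) *v e = (\<mu> *\<^sub>R transpose K) *v e"
      by (simp only: assms(6))
    then show ?thesis
      by (simp only: matrix_vector_mult_diff_rdistrib scaleR_matrix_vector_assoc[symmetric] matrix_vector_mul_assoc)
  qed
  have i1: "v \<bullet> (P0 *v (B *v e)) = 0"
    by (metis dot_lmul_matrix PT Pv vector_transpose_matrix inner_zero_left)
  have i2: "v \<bullet> (transpose A0 *v (transpose K *v e)) = 0"
    by (metis dot_lmul_matrix Av transpose_transpose vector_transpose_matrix inner_zero_left)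
  have i3: "v \<bullet> (transpose K *v e) = w \<bullet> e"
    by (metis dot_lmul_matrix w_def transpose_transpose vector_transpose_matrix)
  have "v \<bullet> (P0 *v (B *v e) - h *\<^sub>R (transpose A0 *v (transpose K *v e))) = \<mu> * (w \<bullet> e)"
    using eq i3 by simp
  then have me: "\<mu> * (w \<bullet> e) = 0" using i1 i2 by (simp add: inner_diff_right)
  have "v \<bullet> ((P0 + h *\<^sub>R (transpose K ** K)) *v v) > 0"
    using assms(7) v0 by (simp add: pd_def)
  moreover have "v \<bullet> ((P0 + h *\<^sub>R (transpose K ** K)) *v v) = h * (w \<bullet> w)"
  proof -
    have "(P0 + h *\<^sub>R (transpose K ** K)) *v v = P0 *v v + h *\<^sub>R (transpose K *v w)"
      by (simp only: matrix_vector_mult_add_rdistrib scaleR_matrix_vector_assoc[symmetric] matrix_vector_mul_assoc w_def)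
    moreover have "v \<bullet> (transpose K *v w) = w \<bullet> w"
      by (metis dot_lmul_matrix w_def transpose_transpose vector_transpose_matrix)
    ultimately show ?thesis using Pv by (simp add: inner_add_right)
  qed
  ultimately have "w \<noteq> 0" by auto
  then have "w \<bullet> e \<noteq> 0" using one_dim_nz e_def by simp
  then show ?thesis using me by simp
qed

end
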